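(* Let $F:\mathbb{R}^d\to\mathbb{R}$ be continuously differentiable with $L$-Lipschitz gradient. Consider the simplified curvature-aware Adam iteration described in the context, and suppose the stochastic gradients satisfy, for all $k$, $\mathbb{E}[g_k\mid\theta_k]=\nabla F(\theta_k)$, $\mathbb{E}[\|g_k-\nabla F(\theta_k)\|^2\mid\theta_k]\le\sigma^2$, and $\|g_k\|_\infty\le\|g_k\|\le G$ for a constant $G>0$. Let $D_k:=\operatorname{diag}\big(1/(\sqrt{v_k}+\delta)\big)$, so that $\theta_{k+1}-\theta_k=-\eta D_k m_k$. Then for all $k\ge 0$, $$c_0 I\preceq D_k\preceq \frac{1}{\delta}I,\qquad c_0:=\frac{1}{(1+2C_\alpha)G+\delta},$$ and $$\|\theta_{k+1}-\theta_k\|\le \eta M,\qquad M:=\frac{(1+2C_\alpha)G}{\delta}.$$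
   Context: Simplified curvature-aware Adam iteration: given parameters $\beta_1,\beta_2\in[0,1)$, $\delta>0$, stepsize $\eta>0$, a base coefficient $\alpha_{\mathrm{base}}>0$, and stochastic gradient estimators $g_k$ of $\nabla F(\theta_k)$, the iterates are $\tilde g_k:=g_k+\alpha_k(g_k-g_{k-1})$, $m_k:=\beta_1 m_{k-1}+(1-\beta_1)\tilde g_k$, $v_k:=\beta_2 v_{k-1}+(1-\beta_2)\tilde g_k^{2}$ (coordinatewise), $\theta_{k+1}:=\theta_k-\eta\, m_k/(\sqrt{v_k}+\delta)$ (coordinatewise), with initialization $m_{-1}=0$, $v_{-1}=0$, $\theta_{-1}=\theta_0$, $\alpha_0=0$. The coefficients satisfy $|\alpha_k|\le C_\alpha:=2\alpha_{\mathrm{base}}$ for all $k$. $\|\cdot\|$ is the Euclidean norm and $\preceq$ the Loewner order. *)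

theory Defs
  imports "HOL-Analysis.Analysis"
begin

text \<open>Curvature-corrected gradient: gtilde_k = g_k + alpha_k (g_k - g_(k-1)).
  At k = 0 we have alpha_0 = 0 (and g(0-1) = g 0 in nat arithmetic), so gtilde_0 = g_0.\<close>
definition gtil :: "(nat \<Rightarrow> real) \<Rightarrow> (nat \<Rightarrow> real^'n) \<Rightarrow> nat \<Rightarrow> real^'n" where
  "gtil \<alpha> g k = g k + \<alpha> k *\<^sub>R (g k - g (k - 1))"

fun mseq :: "real \<Rightarrow> (nat \<Rightarrow> real) \<Rightarrow> (nat \<Rightarrow> real^'n) \<Rightarrow> nat \<Rightarrow> real^'n" where
  "mseq \<beta>1 \<alpha> g 0 = \<beta>1 *\<^sub>R 0 + (1 - \<beta>1) *\<^sub>R gtil \<alpha> g 0"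
| "mseq \<beta>1 \<alpha> g (Suc k) = \<beta>1 *\<^sub>R mseq \<beta>1 \<alpha> g k + (1 - \<beta>1) *\<^sub>R gtil \<alpha> g (Suc k)"

definition vsq :: "real^'n \<Rightarrow> real^'n" where
  "vsq x = (\<chi> i. (x $ i)^2)"

fun vseq :: "real \<Rightarrow> (nat \<Rightarrow> real) \<Rightarrow> (nat \<Rightarrow> real^'n) \<Rightarrow> nat \<Rightarrow> real^'n" where
  "vseq \<beta>2 \<alpha> g 0 = \<beta>2 *\<^sub>R 0 + (1 - \<beta>2) *\<^sub>R vsq (gtil \<alpha> g 0)"
| "vseq \<beta>2 \<alpha> g (Suc k) = \<beta>2 *\<^sub>R vseq \<beta>2 \<alpha> g k + (1 - \<beta>2) *\<^sub>R vsq (gtil \<alpha> g (Suc k))"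

fun theta :: "real \<Rightarrow> real \<Rightarrow> real \<Rightarrow> real \<Rightarrow> (nat \<Rightarrow> real) \<Rightarrow> (nat \<Rightarrow> real^'n)
    \<Rightarrow> real^'n \<Rightarrow> nat \<Rightarrow> real^'n" where
  "theta \<eta> \<delta> \<beta>1 \<beta>2 \<alpha> g \<theta>0 0 = \<theta>0"
| "theta \<eta> \<delta> \<beta>1 \<beta>2 \<alpha> g \<theta>0 (Suc k) =
     theta \<eta> \<delta> \<beta>1 \<beta>2 \<alpha> g \<theta>0 k
     - \<eta> *\<^sub>R (\<chi> i. mseq \<beta>1 \<alpha> g k $ i / (sqrt (vseq \<beta>2 \<alpha> g k $ i) + \<delta>))"

definition Dmat :: "real \<Rightarrow> real \<Rightarrow> (nat \<Rightarrow> real) \<Rightarrow> (nat \<Rightarrow> real^'n) \<Rightarrow> nat \<Rightarrow> real^'n^'n" where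
  "Dmat \<delta> \<beta>2 \<alpha> g k =
     (\<chi> i j. if i = j then 1 / (sqrt (vseq \<beta>2 \<alpha> g k $ i) + \<delta>) else 0)"

definition psd :: "real^'n^'n \<Rightarrow> bool" where
  "psd A \<longleftrightarrow> transpose A = A \<and> (\<forall>x. 0 \<le> x \<bullet> (A *v x))"

definition loewner_le :: "real^'n^'n \<Rightarrow> real^'n^'n \<Rightarrow> bool" (infix "\<preceq>\<^sub>L" 50) where
  "A \<preceq>\<^sub>L B \<longleftrightarrow> psd (B - A)"

end

theory Submission
  imports Defs
begin

lemma diag_psd:
  fixes d :: "'n::finite \<Rightarrow> real"
  assumes "\<And>i. 0 \<le> d i"
  shows "psd ((\<chi> i j. if i = j then d i else 0) :: real^'n^'n)"
proof -
  have T: "transpose ((\<chi> i j. if i = j then d i else 0) :: real^'n^'n) = (\<chi> i j. if i = j then d i else 0)"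
    by (auto simp: transpose_def vec_eq_iff)
  have "0 \<le> x \<bullet> (((\<chi> i j. if i = j then d i else 0) :: real^'n^'n) *v x)" for x :: "real^'n"
  proof -
    have "((\<chi> i j. if i = j then d i else 0) :: real^'n^'n) *v x = (\<chi> i. d i * x $ i)"
      by (simp add: matrix_vector_mult_def vec_eq_iff if_distrib[of "\<lambda>c. c * _"] sum.delta cong: if_cong)
    then show ?thesis
      by (simp add: inner_vec_def assms sum_nonneg mult.left_commute)
  qed
  then show ?thesis using T unfolding psd_def by blast
qed

theorem lemma2:
  fixes F :: "real^'d \<Rightarrow> real" and gradF :: "real^'d \<Rightarrow> real^'d" and L :: real
    and \<beta>1 \<beta>2 \<delta> \<eta> \<alpha>base G :: real
    and \<alpha> :: "nat \<Rightarrow> real" and g :: "nat \<Rightarrow> real^'d" and \<theta>0 :: "real^'d"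
  assumes F_grad: "\<And>x. (F has_derivative (\<lambda>h. gradF x \<bullet> h)) (at x)"
    and grad_cont: "continuous_on UNIV gradF"
    and grad_lip: "\<And>x y. norm (gradF x - gradF y) \<le> L * norm (x - y)"
    and \<beta>1: "0 \<le> \<beta>1" "\<beta>1 < 1"
    and \<beta>2: "0 \<le> \<beta>2" "\<beta>2 < 1"
    and \<delta>: "\<delta> > 0" and \<eta>: "\<eta> > 0" and \<alpha>base: "\<alpha>base > 0"
    and \<alpha>0: "\<alpha> 0 = 0"
    and \<alpha>bd: "\<And>k. \<bar>\<alpha> k\<bar> \<le> 2 * \<alpha>base"
    and G: "G > 0"
    and gbd: "\<And>k. (\<forall>i. \<bar>g k $ i\<bar> \<le> norm (g k)) \<and> norm (g k) \<le> G"
  shows "\<forall>k. (1 / ((1 + 2 * (2 * \<alpha>base)) * G + \<delta>)) *\<^sub>R mat 1 \<preceq>\<^sub>L Dmat \<delta> \<beta>2 \<alpha> g k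
           \<and> Dmat \<delta> \<beta>2 \<alpha> g k \<preceq>\<^sub>L (1 / \<delta>) *\<^sub>R mat 1
           \<and> norm (theta \<eta> \<delta> \<beta>1 \<beta>2 \<alpha> g \<theta>0 (Suc k) - theta \<eta> \<delta> \<beta>1 \<beta>2 \<alpha> g \<theta>0 k)
               \<le> \<eta> * ((1 + 2 * (2 * \<alpha>base)) * G / \<delta>)"
proof -
  define C where "C = 2 * \<alpha>base"
  define B where "B = (1 + 2 * C) * G"
  have C0: "C \<ge> 0" using \<alpha>base by (simp add: C_def)
  have B0: "B \<ge> 0" using C0 G by (simp add: B_def)
  have gG: "norm (g k) \<le> G" for k using gbd by blast
  have gtn: "norm (gtil \<alpha> g k) \<le> B" for k
  proof -
    have "norm (gtil \<alpha> g k) \<le> norm (g k) + \<bar>\<alpha> k\<bar> * norm (g k - g (k - 1))"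
      unfolding gtil_def by (metis norm_scaleR norm_triangle_ineq)
    also have "\<dots> \<le> G + C * (G + G)"
    proof -
      have "norm (g k - g (k - 1)) \<le> G + G"
        using norm_triangle_ineq4[of "g k" "g (k-1)"] gG[of k] gG[of "k-1"] by linarith
      moreover have "\<bar>\<alpha> k\<bar> \<le> C" using \<alpha>bd C_def by simp
      ultimately have "\<bar>\<alpha> k\<bar> * norm (g k - g (k - 1)) \<le> C * (G + G)"
        by (meson abs_ge_zero mult_mono norm_ge_zero C0 order.trans)
      then show ?thesis using gG[of k] by linarith
    qed
    finally show ?thesis by (simp add: B_def algebra_simps)
  qed
  have gti: "\<bar>gtil \<alpha> g k $ i\<bar> \<le> B" for k i
    using component_le_norm_cart[of "gtil \<alpha> g k" i] gtn[of k] by linarith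
  have gti2: "(gtil \<alpha> g k $ i)^2 \<le> B^2" for k i
    using gti[of k i] by (metis abs_ge_zero power2_abs power_mono)
  have mb: "norm (mseq \<beta>1 \<alpha> g k) \<le> B" for k
  proof (induction k)
    case 0
    have "norm (mseq \<beta>1 \<alpha> g 0) = (1 - \<beta>1) * norm (gtil \<alpha> g 0)" using \<beta>1 by simp
    also have "\<dots> \<le> (1 - \<beta>1) * B" using gtn \<beta>1 by (simp add: mult_left_mono)
    also have "\<dots> \<le> B" using \<beta>1 B0 by (simp add: mult_left_le_one_le)
    finally show ?case .
  next
    case (Suc k)
    have "norm (mseq \<beta>1 \<alpha> g (Suc k)) \<le> \<beta>1 * norm (mseq \<beta>1 \<alpha> g k) + (1 - \<beta>1) * norm (gtil \<alpha> g (Suc k))"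
      using \<beta>1 by (simp, metis (no_types, lifting) abs_of_nonneg diff_ge_0_iff_ge less_imp_le norm_scaleR norm_triangle_ineq)
    also have "\<dots> \<le> \<beta>1 * B + (1 - \<beta>1) * B"
      using Suc gtn[of "Suc k"] \<beta>1 by (intro add_mono mult_left_mono) auto
    finally show ?case by (simp add: algebra_simps)
  qed
  have vb: "0 \<le> vseq \<beta>2 \<alpha> g k $ i \<and> vseq \<beta>2 \<alpha> g k $ i \<le> B^2" for k i
  proof (induction k)
    case 0
    have "vseq \<beta>2 \<alpha> g 0 $ i = (1 - \<beta>2) * (gtil \<alpha> g 0 $ i)^2" by (simp add: vsq_def)
    moreover have "(1 - \<beta>2) * (gtil \<alpha> g 0 $ i)^2 \<le> 1 * B^2"
      using gti2[of 0 i] \<beta>2 by (intro mult_mono) auto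
    ultimately show ?case using \<beta>2 by simp
  next
    case (Suc k)
    have e: "vseq \<beta>2 \<alpha> g (Suc k) $ i = \<beta>2 * vseq \<beta>2 \<alpha> g k $ i + (1 - \<beta>2) * (gtil \<alpha> g (Suc k) $ i)^2"
      by (simp add: vsq_def)
    have "\<beta>2 * vseq \<beta>2 \<alpha> g k $ i + (1 - \<beta>2) * (gtil \<alpha> g (Suc k) $ i)^2 \<le> \<beta>2 * B^2 + (1 - \<beta>2) * B^2"
      using Suc gti2[of "Suc k" i] \<beta>2 by (intro add_mono mult_left_mono) auto
    moreover have "0 \<le> \<beta>2 * vseq \<beta>2 \<alpha> g k $ i + (1 - \<beta>2) * (gtil \<alpha> g (Suc k) $ i)^2"
      using Suc \<beta>2 by simp
    ultimately show ?case unfolding e by (simp add: algebra_simps)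
  qed
  have sq: "0 \<le> sqrt (vseq \<beta>2 \<alpha> g k $ i) \<and> sqrt (vseq \<beta>2 \<alpha> g k $ i) \<le> B" for k i
    using vb[of k i] B0 by (metis real_sqrt_ge_zero real_sqrt_le_mono real_sqrt_abs abs_of_nonneg)
  show ?thesis
  proof (intro allI conjI)
    fix k
    let ?s = "\<lambda>i. sqrt (vseq \<beta>2 \<alpha> g k $ i)"
    have eq1: "Dmat \<delta> \<beta>2 \<alpha> g k - (1 / ((1 + 2 * (2 * \<alpha>base)) * G + \<delta>)) *\<^sub>R mat 1
       = (\<chi> i j. if i = j then 1 / (?s i + \<delta>) - 1 / (B + \<delta>) else 0)"
      by (auto simp: Dmat_def mat_def vec_eq_iff B_def C_def)
    have "1 / (B + \<delta>) \<le> 1 / (?s i + \<delta>)" for i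
      proof (intro divide_left_mono)
      have "0 < ?s i + \<delta>" using sq[of k i] \<delta> by linarith
      moreover have "0 < B + \<delta>" using B0 \<delta> by linarith
      ultimately show "0 < (B + \<delta>) * (?s i + \<delta>)" by simp
    qed (use sq[of k i] in auto)
    then show "(1 / ((1 + 2 * (2 * \<alpha>base)) * G + \<delta>)) *\<^sub>R mat 1 \<preceq>\<^sub>L Dmat \<delta> \<beta>2 \<alpha> g k"
      unfolding loewner_le_def eq1 by (intro diag_psd) auto
    have eq2: "(1 / \<delta>) *\<^sub>R mat 1 - Dmat \<delta> \<beta>2 \<alpha> g k
       = (\<chi> i j. if i = j then 1 / \<delta> - 1 / (?s i + \<delta>) else 0)"
      by (auto simp: Dmat_def mat_def vec_eq_iff)
    have "1 / (?s i + \<delta>) \<le> 1 / \<delta>" for i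
    proof (intro divide_left_mono)
      have "0 < ?s i + \<delta>" using sq[of k i] \<delta> by linarith
      then show "0 < (?s i + \<delta>) * \<delta>" using \<delta> by simp
    qed (use sq[of k i] in auto)
    then show "Dmat \<delta> \<beta>2 \<alpha> g k \<preceq>\<^sub>L (1 / \<delta>) *\<^sub>R mat 1"
      unfolding loewner_le_def eq2 by (intro diag_psd) auto
    let ?m = "mseq \<beta>1 \<alpha> g k"
    let ?w = "(\<chi> i. ?m $ i / (?s i + \<delta>)) :: real^'d"
    have "norm ?w \<le> norm ((1 / \<delta>) *\<^sub>R ?m)"
    proof (rule norm_le_componentwise_cart)
      fix i
      have "\<bar>?m $ i\<bar> / (?s i + \<delta>) \<le> \<bar>?m $ i\<bar> / \<delta>"
      proof (intro divide_left_mono)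
        have "0 < ?s i + \<delta>" using sq[of k i] \<delta> by linarith
        then show "0 < (?s i + \<delta>) * \<delta>" using \<delta> by simp
      qed (use sq[of k i] in auto)
      then show "norm (?w $ i) \<le> norm (((1 / \<delta>) *\<^sub>R ?m) $ i)"
        using sq[of k i] \<delta> by (simp add: abs_div)
    qed
    also have "\<dots> = norm ?m / \<delta>" using \<delta> by simp
    also have "\<dots> \<le> B / \<delta>" using mb[of k] \<delta> by (simp add: divide_right_mono)
    finally have "norm ?w \<le> B / \<delta>" .
    moreover have "norm (theta \<eta> \<delta> \<beta>1 \<beta>2 \<alpha> g \<theta>0 (Suc k) - theta \<eta> \<delta> \<beta>1 \<beta>2 \<alpha> g \<theta>0 k) = \<eta> * norm ?w"
      using \<eta> by simp
    ultimately show "norm (theta \<eta> \<delta> \<beta>1 \<beta>2 \<alpha> g \<theta>0 (Suc k) - theta \<eta> \<delta> \<beta>1 \<beta>2 \<alpha> g \<theta>0 k)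
               \<le> \<eta> * ((1 + 2 * (2 * \<alpha>base)) * G / \<delta>)"
      using \<eta> mult_left_mono[of "norm ?w" "B / \<delta>" \<eta>] by (simp add: B_def C_def)
  qed
qed

end
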